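(* Let $d\geq 3$ and let $A\in\mathrm{Sym}^d(\mathbb{R}^n)$ be an orthogonal tensor. Then $n=1$ or $n=2$. Moreover, for $n=2$ the orthogonal tensors in $\mathrm{Sym}^d(\mathbb{R}^2)$ are exactly the tensors $(\rho,\dots,\rho)\cdot A_0$ with $\rho\in O(2)$, where $A_0$ is the symmetric tensor with entries \[ (A_0)_{i_1\dots i_d}=\begin{cases}(-1)^k & \text{if }\#\{j: i_j=2\}=2k,\\ 0&\text{otherwise.}\end{cases} \] Equivalently, these are the tensors associated with the forms $\rho^*\mathrm{Ch}_{d,2}$, $\rho\in O(2)$.
   Context: Orthogonal tensors: \begin{itemize} \item For a tensor $A\in\otimes_{j=1}^d\mathbb{R}^n$ and $u\in\mathbb{R}^n$, the contraction $A\times_j u$ is the order-$(d-1)$ tensor $\big(\sum_{i_j}a_{i_1\dots i_j\dots i_d}u_{i_j}\big)$. \item An $n\times n$ matrix ($d=2$) is orthogonal in the usual sense. \item For $d\geq 3$, an $n^d$-tensor $A$ is orthogonal if $A\times_j u$ is orthogonal for every $j=1,\dots,d$ and every unit vector $u\in\mathbb{R}^n$. \end{itemize} The group $O(n)\times\cdots\times O(n)$ acts by \[ \big((\rho^{(1)},\dots,\rho^{(d)})\cdot A\big)_{i_1\dots i_d}=\sum_{j_1,\dots,j_d}\rho^{(1)}_{i_1j_1}\cdots\rho^{(d)}_{i_dj_d}a_{j_1\dots j_d}. \] The binary Chebyshev form is $\mathrm{Ch}_{d,2}(x_1,x_2)=\sum_{k=0}^{\lfloor d/2\rfloor}\binom{d}{2k}(-1)^kx_1^{d-2k}x_2^{2k}$.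 For a form $p$ and $\rho\in O(2)$, $(\rho^*p)(x)=p(\rho^{-1}x)$. The symmetric tensor $A$ associated with a form $p$ satisfies $p(x)=\langle A,x\otimes\cdots\otimes x\rangle_F$. *)

theory Defs
  imports "HOL-Analysis.Analysis"
begin

text \<open>Tensors in the d-fold tensor power of R^n are represented as functions
  on index lists: an index is a list of length d with entries in 0..n-1
  (0-based; the paper's index 2 is our index 1). Only values on valid
  index lists matter.\<close>

definition tidx :: "nat \<Rightarrow> nat \<Rightarrow> nat list set" where
  "tidx n d = {is. length is = d \<and> set is \<subseteq> {..<n}}"

definition sym_tensor :: "nat \<Rightarrow> nat \<Rightarrow> (nat list \<Rightarrow> real) \<Rightarrow> bool" where
  "sym_tensor n d A \<longleftrightarrow>
     (\<forall>is \<in> tidx n d. \<forall>js \<in> tidx n d. mset is = mset js \<longrightarrow> A is = A js)"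

definition orth_matrix :: "nat \<Rightarrow> (nat \<Rightarrow> nat \<Rightarrow> real) \<Rightarrow> bool" where
  "orth_matrix n M \<longleftrightarrow>
     (\<forall>i<n. \<forall>l<n. (\<Sum>k<n. M i k * M l k) = (if i = l then 1 else 0))"

definition contract :: "nat \<Rightarrow> nat \<Rightarrow> (nat \<Rightarrow> real) \<Rightarrow> (nat list \<Rightarrow> real) \<Rightarrow> (nat list \<Rightarrow> real)" where
  "contract n j u A = (\<lambda>is. \<Sum>i<n. u i * A (take j is @ i # drop j is))"

fun orth_tensor :: "nat \<Rightarrow> nat \<Rightarrow> (nat list \<Rightarrow> real) \<Rightarrow> bool" where
  "orth_tensor n 0 A = False"
| "orth_tensor n (Suc 0) A = False"
| "orth_tensor n (Suc (Suc 0)) A = orth_matrix n (\<lambda>i k. A [i, k])"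
| "orth_tensor n (Suc (Suc (Suc d))) A =
     (\<forall>j < Suc (Suc (Suc d)). \<forall>u. (\<Sum>i<n. (u i)\<^sup>2) = 1 \<longrightarrow>
        orth_tensor n (Suc (Suc d)) (contract n j u A))"

definition tensor_act :: "nat \<Rightarrow> nat \<Rightarrow> (nat \<Rightarrow> nat \<Rightarrow> real) \<Rightarrow> (nat list \<Rightarrow> real) \<Rightarrow> (nat list \<Rightarrow> real)" where
  "tensor_act n d \<rho> T = (\<lambda>is. \<Sum>js \<in> tidx n d. (\<Prod>k<d. \<rho> (is ! k) (js ! k)) * T js)"

definition A0 :: "nat list \<Rightarrow> real" where
  "A0 is = (let m = count (mset is) 1 in if even m then (-1) ^ (m div 2) else 0)"

end

theory Submission
  imports Defs "HOL-Analysis.Analysis"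
begin

lemma prod_if_count:
  "(\<Prod>k<length xs. (if xs!k = (1::nat) then w else (1::complex))) = w ^ count (mset xs) 1"
proof (induction xs)
  case Nil then show ?case by simp
next
  case (Cons x xs)
  have "(\<Prod>k<length (x#xs). (if (x#xs)!k = 1 then w else 1)) =
        (if x = 1 then w else 1) * (\<Prod>k<length xs. (if xs!k = 1 then w else 1))"
    by (simp del: prod.lessThan_Suc add: prod.lessThan_Suc_shift)
  then show ?case using Cons by auto
qed

lemma tidx_Suc: "tidx n (Suc d) = (\<lambda>(j,js). j#js) ` ({..<n} \<times> tidx n d)"
  unfolding tidx_def
  apply (auto simp: image_def)
  by (metis Suc_length_conv insert_subset list.simps(15) lessThan_iff)

lemma tidx_0: "tidx n 0 = {[]}" by (auto simp: tidx_def)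

lemma finite_tidx: "finite (tidx n d)"
  by (induction d) (auto simp: tidx_Suc tidx_0)

lemma sum_prod_tidx:
  fixes f :: "nat \<Rightarrow> nat \<Rightarrow> 'a::comm_semiring_1"
  shows "(\<Sum>js\<in>tidx n d. \<Prod>k<d. f k (js!k)) = (\<Prod>k<d. \<Sum>j<n. f k j)"
proof (induction d arbitrary: f)
  case 0 then show ?case by (simp add: tidx_0)
next
  case (Suc d)
  have inj: "inj_on (\<lambda>(j,js). j#js) ({..<n} \<times> tidx n d)" by (auto simp: inj_on_def)
  have "(\<Sum>js\<in>tidx n (Suc d). \<Prod>k<Suc d. f k (js!k))
      = (\<Sum>(j,js)\<in>{..<n} \<times> tidx n d. \<Prod>k<Suc d. f k ((j#js)!k))"
    unfolding tidx_Suc by (subst sum.reindex[OF inj]) (simp add: case_prod_unfold)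
  also have "\<dots> = (\<Sum>j<n. \<Sum>js\<in>tidx n d. f 0 j * (\<Prod>k<d. f (Suc k) (js!k)))"
    by (simp del: prod.lessThan_Suc add: sum.cartesian_product[symmetric] prod.lessThan_Suc_shift)
  also have "\<dots> = (\<Sum>j<n. f 0 j * (\<Prod>k<d. \<Sum>j<n. f (Suc k) j))"
    by (simp add: sum_distrib_left[symmetric] Suc[of "\<lambda>k. f (Suc k)"])
  also have "\<dots> = (\<Prod>k<Suc d. \<Sum>j<n. f k j)"
    by (simp del: prod.lessThan_Suc add: prod.lessThan_Suc_shift sum_distrib_right)
  finally show ?case .
qed

lemma Re_i_pow: "Re (\<i> ^ m) = (if even m then (-1) ^ (m div 2) else 0)"
proof (cases "even m")
  case True
  then obtain q where m: "m = 2*q" by blast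
  have "\<i> ^ m = (-1::complex) ^ q" unfolding m power_mult by simp
  also have "\<dots> = complex_of_real ((-1)^q)" by simp
  finally show ?thesis using m True by simp
next
  case False
  then obtain q where m: "m = 2*q+1" using oddE by blast
  have "\<i> ^ m = \<i> * complex_of_real ((-1)^q)" unfolding m power_add power_mult by simp
  then show ?thesis using m False by simp
qed

definition wv :: "nat \<Rightarrow> complex" where "wv j = (if j = 1 then \<i> else 1)"

lemma A0_prod: "length js = d \<Longrightarrow> A0 js = Re (\<Prod>k<d. wv (js!k))"
  using prod_if_count[of js \<i>] by (simp add: A0_def wv_def Re_i_pow Let_def)

lemma tact_A0:
  "tensor_act 2 d \<rho> A0 is =
     Re (\<Prod>k<d. complex_of_real (\<rho> (is!k) 0) + \<i> * complex_of_real (\<rho> (is!k) 1))"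
proof -
  have "tensor_act 2 d \<rho> A0 is = (\<Sum>js\<in>tidx 2 d. Re (\<Prod>k<d. complex_of_real (\<rho> (is ! k) (js ! k)) * wv (js!k)))"
    unfolding tensor_act_def
  proof (rule sum.cong[OF refl])
    fix js assume "js \<in> tidx 2 d"
    then have "length js = d" by (simp add: tidx_def)
    then show "(\<Prod>k<d. \<rho> (is ! k) (js ! k)) * A0 js = Re (\<Prod>k<d. complex_of_real (\<rho> (is ! k) (js ! k)) * wv (js!k))"
      by (simp add: A0_prod prod.distrib of_real_prod[symmetric] del: of_real_prod)
  qed
  also have "\<dots> = Re (\<Sum>js\<in>tidx 2 d. \<Prod>k<d. complex_of_real (\<rho> (is ! k) (js ! k)) * wv (js!k))"
    by (simp add: Re_sum)
  also have "\<dots> = Re (\<Prod>k<d. \<Sum>j<2. complex_of_real (\<rho> (is ! k) j) * wv j)"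
    by (subst sum_prod_tidx) simp
  also have "\<dots> = Re (\<Prod>k<d. complex_of_real (\<rho> (is!k) 0) + \<i> * complex_of_real (\<rho> (is!k) 1))"
    by (simp add: wv_def numeral_2_eq_2 mult.commute)
  finally show ?thesis .
qed

definition chtype :: "nat \<Rightarrow> (nat list \<Rightarrow> real) \<Rightarrow> complex \<Rightarrow> bool" where
  "chtype d A \<gamma> \<longleftrightarrow> (\<forall>is\<in>tidx 2 d. A is = Re (\<gamma> * \<i> ^ count (mset is) 1))"

lemma cmod1: "cmod \<gamma> = 1 \<Longrightarrow> (Re \<gamma>)^2 + (Im \<gamma>)^2 = 1"
  by (metis norm_complex_def real_sqrt_eq_1_iff)

lemma insert_tidx:
  assumes "is \<in> tidx n d" "j \<le> d" "i < n"
  shows "take j is @ i # drop j is \<in> tidx n (Suc d)"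
    and "mset (take j is @ i # drop j is) = add_mset i (mset is)"
proof -
  have "mset (take j is) + mset (drop j is) = mset is"
    by (metis append_take_drop_id mset_append)
  then show "mset (take j is @ i # drop j is) = add_mset i (mset is)" by simp
  have "set (take j is) \<subseteq> set is" "set (drop j is) \<subseteq> set is"
    by (auto dest: in_set_takeD in_set_dropD)
  then show "take j is @ i # drop j is \<in> tidx n (Suc d)"
    using assms by (auto simp: tidx_def)
qed

lemma contract_ch:
  assumes ch: "chtype (Suc d) A \<gamma>" and j: "j \<le> d"
  shows "chtype d (contract 2 j u A) (\<gamma> * (complex_of_real (u 0) + \<i> * complex_of_real (u 1)))"
  unfolding chtype_def
proof
  fix xs assume xs: "xs \<in> tidx 2 d"
  let ?c = "count (mset xs) 1"
  have L0: "A (take j xs @ 0 # drop j xs) = Re (\<gamma> * \<i> ^ ?c)"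
    using ch insert_tidx[OF xs j, of 0] unfolding chtype_def by auto
  have L1: "A (take j xs @ 1 # drop j xs) = Re (\<gamma> * \<i> ^ Suc ?c)"
    using ch insert_tidx[OF xs j, of 1] unfolding chtype_def by auto
  have "contract 2 j u A xs = u 0 * Re (\<gamma> * \<i> ^ ?c) + u 1 * Re (\<gamma> * \<i> ^ Suc ?c)"
    unfolding contract_def using L0 L1 by (simp add: numeral_2_eq_2)
  also have "\<dots> = Re (\<gamma> * (complex_of_real (u 0) + \<i> * complex_of_real (u 1)) * \<i> ^ ?c)"
    by (simp add: algebra_simps)
  finally show "contract 2 j u A xs = Re (\<gamma> * (complex_of_real (u 0) + \<i> * complex_of_real (u 1)) * \<i> ^ ?c)" .
qed

lemma unit_c:
  assumes "cmod \<gamma> = 1" "(\<Sum>i<(2::nat). (u i)\<^sup>2) = (1::real)"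
  shows "cmod (\<gamma> * (complex_of_real (u 0) + \<i> * complex_of_real (u 1))) = 1"
proof -
  have "(u 0)^2 + (u 1)^2 = 1" using assms(2) by (simp add: numeral_2_eq_2)
  then have "cmod (complex_of_real (u 0) + \<i> * complex_of_real (u 1)) = 1"
    by (simp add: norm_complex_def)
  then show ?thesis using assms(1) by (simp add: norm_mult)
qed

lemma ch_orth:
  assumes "cmod \<gamma> = 1" "chtype (Suc (Suc k)) A \<gamma>"
  shows "orth_tensor 2 (Suc (Suc k)) A"
  using assms
proof (induction k arbitrary: A \<gamma>)
  case 0
  have t: "[a,b] \<in> tidx 2 2" if "a < 2" "b < 2" for a b using that by (auto simp: tidx_def)
  have v00: "A [0,0] = Re \<gamma>" using 0(2) t[of 0 0] unfolding chtype_def by (simp add: numeral_2_eq_2)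
  have v01: "A [0,Suc 0] = - Im \<gamma>" using 0(2) t[of 0 1] unfolding chtype_def by (simp add: numeral_2_eq_2)
  have v10: "A [Suc 0,0] = - Im \<gamma>" using 0(2) t[of 1 0] unfolding chtype_def by (simp add: numeral_2_eq_2)
  have v11: "A [Suc 0,Suc 0] = - Re \<gamma>" using 0(2) t[of 1 1] unfolding chtype_def by (simp add: numeral_2_eq_2)
  have n: "(Re \<gamma>)^2 + (Im \<gamma>)^2 = 1" using cmod1[OF 0(1)] .
  show ?case
    unfolding orth_tensor.simps orth_matrix_def
  proof (intro allI impI)
    fix i l :: nat assume "i < 2" "l < 2"
    then have "i = 0 \<or> i = 1" "l = 0 \<or> l = 1" by auto
    then show "(\<Sum>k<2. A [i, k] * A [l, k]) = (if i = l then 1 else 0)"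
      using n by (auto simp: numeral_2_eq_2 v00 v01 v10 v11 power2_eq_square algebra_simps)
  qed
next
  case (Suc k)
  show ?case
    unfolding orth_tensor.simps
  proof (intro allI impI)
    fix j and u :: "nat \<Rightarrow> real" assume j: "j < Suc (Suc (Suc k))" and u: "(\<Sum>i<2. (u i)\<^sup>2) = (1::real)"
    show "orth_tensor 2 (Suc (Suc k)) (contract 2 j u A)"
      by (rule Suc.IH[OF unit_c[OF Suc.prems(1) u] contract_ch]) (use Suc.prems(2) j in auto)
  qed
qed

definition ev :: "nat \<Rightarrow> nat \<Rightarrow> real" where "ev i = (\<lambda>x. if x = i then 1 else 0)"

lemma ev_unit: "i < n \<Longrightarrow> (\<Sum>x<n. (ev i x)\<^sup>2) = 1"
proof -
  assume "i < n"
  have "(\<Sum>x<n. (ev i x)\<^sup>2) = (\<Sum>x<n. if x = i then 1 else 0)" by (rule sum.cong) (auto simp: ev_def)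
  then show ?thesis using \<open>i < n\<close> by simp
qed

lemma contract0: "contract n 0 u A xs = (\<Sum>i<n. u i * A (i # xs))"
  by (simp add: contract_def)

lemma contract_ev: "i < n \<Longrightarrow> contract n 0 (ev i) A xs = A (i # xs)"
proof -
  assume "i < n"
  have "(\<Sum>j<n. ev i j * A (j # xs)) = (\<Sum>j<n. if j = i then A (i # xs) else 0)" by (rule sum.cong) (auto simp: ev_def)
  then show ?thesis using \<open>i < n\<close> by (simp add: contract0)
qed

lemma symeq: "sym_tensor n d A \<Longrightarrow> xs \<in> tidx n d \<Longrightarrow> ys \<in> tidx n d \<Longrightarrow> mset xs = mset ys \<Longrightarrow> A xs = A ys"
  unfolding sym_tensor_def by blast

lemma cons_tidx: "i < n \<Longrightarrow> xs \<in> tidx n d \<Longrightarrow> i # xs \<in> tidx n (Suc d)"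
  by (simp add: tidx_def)

lemma sym_contract0:
  assumes "sym_tensor n (Suc d) A" shows "sym_tensor n d (contract n 0 u A)"
  unfolding sym_tensor_def contract0
proof (intro ballI impI)
  fix xs ys assume h: "xs \<in> tidx n d" "ys \<in> tidx n d" "mset xs = mset ys"
  show "(\<Sum>i<n. u i * A (i # xs)) = (\<Sum>i<n. u i * A (i # ys))"
  proof (rule sum.cong[OF refl])
    fix x assume "x \<in> {..<n}"
    then have "A (x # xs) = A (x # ys)"
      using symeq[OF assms cons_tidx[OF _ h(1)] cons_tidx[OF _ h(2)]] h(3) by simp
    then show "u x * A (x # xs) = u x * A (x # ys)" by simp
  qed
qed

lemma orth_contract0:
  "orth_tensor n (Suc (Suc (Suc d))) A \<Longrightarrow> (\<Sum>i<n. (u i)\<^sup>2) = 1 \<Longrightarrow>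
     orth_tensor n (Suc (Suc d)) (contract n 0 u A)"
  by (simp only: orth_tensor.simps)

lemma tidx_cons_cases: "xs \<in> tidx n (Suc d) \<Longrightarrow> \<exists>x ys. xs = x # ys \<and> x < n \<and> ys \<in> tidx n d"
  unfolding tidx_Suc by auto

lemma step2:
  assumes d: "d \<ge> 3" and S: "sym_tensor 2 (Suc d) A" and O: "orth_tensor 2 (Suc d) A"
    and IH: "\<And>B. sym_tensor 2 d B \<Longrightarrow> orth_tensor 2 d B \<Longrightarrow> \<exists>\<gamma>. cmod \<gamma> = 1 \<and> chtype d B \<gamma>"
  shows "\<exists>\<gamma>. cmod \<gamma> = 1 \<and> chtype (Suc d) A \<gamma>"
proof -
  obtain m where dm: "d = Suc (Suc (Suc m))" using d by (metis Suc3_eq_add_3 add.commute le_Suc_ex)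
  have OO: "orth_tensor 2 d (contract 2 0 (ev i) A)" if "i < 2" for i
    using orth_contract0[of 2 "Suc m" A "ev i"] O ev_unit[OF that] unfolding dm by blast
  obtain \<gamma>0 where g0: "cmod \<gamma>0 = 1" "chtype d (contract 2 0 (ev 0) A) \<gamma>0"
    using IH[OF sym_contract0[OF S] OO[of 0]] by auto
  obtain \<gamma>1 where g1: "cmod \<gamma>1 = 1" "chtype d (contract 2 0 (ev 1) A) \<gamma>1"
    using IH[OF sym_contract0[OF S] OO[of 1]] by auto
  have A0c: "A (0 # xs) = Re (\<gamma>0 * \<i> ^ count (mset xs) 1)" if "xs \<in> tidx 2 d" for xs
    using g0(2) that contract_ev[of 0 2 A xs] unfolding chtype_def by auto
  have A1c: "A (1 # xs) = Re (\<gamma>1 * \<i> ^ count (mset xs) 1)" if "xs \<in> tidx 2 d" for xs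
    using g1(2) that contract_ev[of 1 2 A xs] unfolding chtype_def by auto
  let ?r = "replicate m (0::nat)"
  have rt: "?r \<in> tidx 2 m" by (auto simp: tidx_def)
  have l1: "0#0#0#?r \<in> tidx 2 d" "1#0#0#?r \<in> tidx 2 d" "1#1#0#?r \<in> tidx 2 d"
    using rt unfolding dm by (auto simp: tidx_def)
  have e1: "A (1 # 0#0#0#?r) = A (0 # 1#0#0#?r)"
    by (rule symeq[OF S]) (use l1 cons_tidx in auto)
  have e2: "A (1 # 1#0#0#?r) = A (0 # 1#1#0#?r)"
    by (rule symeq[OF S]) (use l1 cons_tidx in auto)
  have "Re \<gamma>1 = - Im \<gamma>0" using e1 A0c[OF l1(2)] A1c[OF l1(1)] by simp
  moreover have "Im \<gamma>1 = Re \<gamma>0" using e2 A0c[OF l1(3)] A1c[OF l1(2)] by (simp add: power2_eq_square)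
  ultimately have g10: "\<gamma>1 = \<i> * \<gamma>0" by (simp add: complex_eqI)
  have "chtype (Suc d) A \<gamma>0"
    unfolding chtype_def
  proof
    fix xs assume "xs \<in> tidx 2 (Suc d)"
    then obtain x ys where xs: "xs = x # ys" "x < 2" "ys \<in> tidx 2 d" using tidx_cons_cases by blast
    then have "x = 0 \<or> x = 1" by auto
    then show "A xs = Re (\<gamma>0 * \<i> ^ count (mset xs) 1)"
    proof
      assume "x = 0" then show ?thesis using A0c[OF xs(3)] xs(1) by simp
    next
      assume "x = 1" then show ?thesis using A1c[OF xs(3)] xs(1) g10 by (simp add: algebra_simps)
    qed
  qed
  then show ?thesis using g0(1) by blast
qed

lemma orth3_0:
  assumes "orth_tensor n 3 A" "(\<Sum>i<n. (u i)\<^sup>2) = 1"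
  shows "orth_matrix n (\<lambda>i k. \<Sum>l<n. u l * A [l,i,k])"
proof -
  have "\<forall>j<3. \<forall>u. (\<Sum>i<n. (u i)\<^sup>2) = 1 \<longrightarrow> orth_matrix n (\<lambda>i k. contract n j u A [i,k])"
    using assms(1) by (simp add: numeral_3_eq_3)
  then have "orth_matrix n (\<lambda>i k. contract n 0 u A [i,k])" using assms(2) by simp
  then show ?thesis by (simp add: contract0)
qed

lemma lt2: "x < (2::nat) \<Longrightarrow> x = 0 \<or> x = 1" by auto

lemma base3:
  assumes S: "sym_tensor 2 3 A" and O: "orth_tensor 2 3 A"
  shows "\<exists>\<gamma>. cmod \<gamma> = 1 \<and> chtype 3 A \<gamma>"
proof -
  define a where "a m = A (replicate (3-m) 0 @ replicate m 1)" for m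
  have val: "A [x,y,z] = a (x+y+z)" if "x < 2" "y < 2" "z < 2" for x y z
  proof -
    have t1: "[x,y,z] \<in> tidx 2 3" using that by (auto simp: tidx_def numeral_3_eq_3)
    have t2: "replicate (3-(x+y+z)) 0 @ replicate (x+y+z) 1 \<in> tidx 2 3"
      using that by (auto simp: tidx_def)
    have "mset [x,y,z] = mset (replicate (3-(x+y+z)) (0::nat) @ replicate (x+y+z) 1)"
      using lt2[OF that(1)] lt2[OF that(2)] lt2[OF that(3)]
      by (auto simp: numeral_3_eq_3)
    then show ?thesis unfolding a_def using symeq[OF S t1 t2] by simp
  qed
  have M: "\<And>i l. i < 2 \<Longrightarrow> l < 2 \<Longrightarrow> (\<Sum>k<2. (\<Sum>j<2. u j * A [j,i,k]) * (\<Sum>j<2. u j * A [j,l,k])) = (if i = l then 1 else 0)"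
    if "(\<Sum>i<2. (u i)\<^sup>2) = 1" for u
    using orth3_0[OF O that] unfolding orth_matrix_def by blast
  have M2: "(u 0 * A [0,i,0] + u 1 * A [1,i,0]) * (u 0 * A [0,l,0] + u 1 * A [1,l,0])
          + (u 0 * A [0,i,1] + u 1 * A [1,i,1]) * (u 0 * A [0,l,1] + u 1 * A [1,l,1]) = (if i = l then 1 else 0)"
    if "(\<Sum>i<(2::nat). (u i)\<^sup>2) = 1" "i < 2" "l < 2" for u i l
    using M[OF that] by (simp add: numeral_2_eq_2)
  have s2: "(\<Sum>i<2. (u i)\<^sup>2) = (u 0)^2 + (u 1)^2" for u :: "nat \<Rightarrow> real"
    by (simp add: numeral_2_eq_2)
  have sm: "(\<Sum>k<2. f k) = f 0 + f 1" for f :: "nat \<Rightarrow> real"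
    by (simp add: numeral_2_eq_2)
  have u0: "(\<Sum>i<2. (ev 0 i)\<^sup>2) = 1" "(\<Sum>i<2. (ev 1 i)\<^sup>2) = 1" by (simp_all add: ev_unit)
  have E0: "(a 0)^2 + (a 1)^2 = 1" "a 0 * a 1 + a 1 * a 2 = 0" "(a 1)^2 + (a 2)^2 = 1"
    using M2[OF u0(1), of 0 0] M2[OF u0(1), of 0 1] M2[OF u0(1), of 1 1]
    by (simp_all add: ev_def val power2_eq_square numeral_2_eq_2 numeral_3_eq_3)
  have E1: "(a 2)^2 + (a 3)^2 = 1" "a 1 * a 2 + a 2 * a 3 = 0"
    using M2[OF u0(2), of 0 1] M2[OF u0(2), of 1 1]
    by (simp_all add: ev_def val power2_eq_square numeral_2_eq_2 numeral_3_eq_3)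
  define s :: real where "s = sqrt (1/2)"
  have ss: "s * s = 1/2" unfolding s_def by (simp add: real_sqrt_mult_self)
  define us where "us = (\<lambda>i::nat. s)"
  have uu: "(\<Sum>i<2. (us i)\<^sup>2) = 1" unfolding us_def s2 power2_eq_square ss by simp
  have "(s * a 0 + s * a 1) * (s * a 1 + s * a 2) + (s * a 1 + s * a 2) * (s * a 2 + s * a 3) = 0"
    using M2[OF uu, of 0 1] by (simp add: us_def val numeral_2_eq_2 numeral_3_eq_3)
  then have "s * s * ((a 0 + a 1) * (a 1 + a 2) + (a 1 + a 2) * (a 2 + a 3)) = 0"
    by (simp add: algebra_simps)
  then have E2: "(a 0 + a 1) * (a 1 + a 2) + (a 1 + a 2) * (a 2 + a 3) = 0" using ss by simp
  have r2: "a 2 = - a 0"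
  proof (cases "a 1 = 0")
    case True
    have q2: "(a 2)^2 = 1" using E0(3) True by simp
    have "(a 3)^2 = 0" using E1(1) q2 by simp
    then have a3: "a 3 = 0" by simp
    have "a 2 * (a 0 + a 2) = 0" using E2 True a3 by (simp add: algebra_simps)
    moreover have "a 2 \<noteq> 0" using q2 by auto
    ultimately show ?thesis by simp
  next
    case False
    have "a 1 * (a 0 + a 2) = 0" using E0(2) by (simp add: algebra_simps)
    then show ?thesis using False by simp
  qed
  have r3: "a 3 = - a 1"
  proof (cases "a 2 = 0")
    case True
    have a0: "a 0 = 0" using True r2 by simp
    have q1: "(a 1)^2 = 1" using E0(1) a0 by simp
    have "a 1 * (a 1 + a 3) = 0" using E2 True a0 by (simp add: algebra_simps)
    moreover have "a 1 \<noteq> 0" using q1 by auto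
    ultimately show ?thesis by simp
  next
    case False
    have "a 2 * (a 1 + a 3) = 0" using E1(2) by (simp add: algebra_simps)
    then show ?thesis using False by simp
  qed
  define \<gamma> where "\<gamma> = complex_of_real (a 0) - \<i> * complex_of_real (a 1)"
  have "cmod \<gamma> = 1" using E0(1) unfolding \<gamma>_def by (simp add: norm_complex_def)
  moreover have "chtype 3 A \<gamma>"
    unfolding chtype_def
  proof
    fix xs assume "xs \<in> tidx 2 3"
    then obtain x y z where xs: "xs = [x,y,z]" "x < 2" "y < 2" "z < 2"
      by (auto simp: tidx_def numeral_3_eq_3 length_Suc_conv)
    have c: "count (mset xs) 1 = x + y + z" "x+y+z \<le> 3"
      using lt2[OF xs(2)] lt2[OF xs(3)] lt2[OF xs(4)] xs(1) by auto
    have am: "a m = Re (\<gamma> * \<i> ^ m)" if "m \<le> 3" for m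
    proof -
      have "m = 0 \<or> m = 1 \<or> m = 2 \<or> m = 3" using that by auto
      moreover have "\<i> ^ 3 = - \<i>" by (simp add: power3_eq_cube)
      ultimately show ?thesis using r2 r3 unfolding \<gamma>_def by (auto simp: power2_eq_square)
    qed
    show "A xs = Re (\<gamma> * \<i> ^ count (mset xs) 1)"
      using val[OF xs(2-4)] xs(1) c am[OF c(2)] by simp
  qed
  ultimately show ?thesis by blast
qed

lemma sum_ev: "i < n \<Longrightarrow> (\<Sum>l<n. ev i l * f l) = (f i :: real)"
proof -
  assume "i < n"
  have "(\<Sum>l<n. ev i l * f l) = (\<Sum>l<n. if l = i then f i else 0)" by (rule sum.cong) (auto simp: ev_def)
  then show ?thesis using \<open>i < n\<close> by simp
qed

lemma no3:
  assumes S: "sym_tensor n 3 A" and O: "orth_tensor n 3 A" and n: "3 \<le> n"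
  shows False
proof -
  define B where "B i j k = A [i,j,k]" for i j k
  have Bs: "B i j k = B p q r" if "i<n" "j<n" "k<n" "p<n" "q<n" "r<n" "mset [i,j,k] = mset [p,q,r]" for i j k p q r
    unfolding B_def by (rule symeq[OF S]) (use that in \<open>auto simp: tidx_def numeral_3_eq_3\<close>)
  have B12: "B i j k = B j i k" and B23: "B i j k = B i k j" if "i<n" "j<n" "k<n" for i j k
    by (rule Bs; use that in \<open>simp add: add_mset_commute\<close>)+
  have O1: "(\<Sum>m<n. B i j m * B i l m) = (if j = l then 1 else 0)" if "i<n" "j<n" "l<n" for i j l
  proof -
    have "orth_matrix n (\<lambda>j k. \<Sum>l<n. ev i l * A [l,j,k])" using orth3_0[OF O ev_unit[OF \<open>i<n\<close>]] .
    then show ?thesis using that unfolding orth_matrix_def B_def by (simp add: sum_ev)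
  qed
  define s :: real where "s = sqrt (1/2)"
  have ss: "s * s = 1/2" unfolding s_def by (simp add: real_sqrt_mult_self)
  have O2: "(\<Sum>m<n. B i j m * B p l m + B p j m * B i l m) = 0"
    if "i<n" "p<n" "i \<noteq> p" "j<n" "l<n" for i p j l
  proof -
    define u where "u = (\<lambda>x. s * ev i x + s * ev p x)"
    have "(\<Sum>x<n. (u x)\<^sup>2) = (\<Sum>x<n. s * s * ev i x + s * s * ev p x)"
      using that by (intro sum.cong refl) (auto simp: u_def ev_def power2_eq_square)
    also have "\<dots> = 1" using that ss by (simp add: sum.distrib sum_distrib_left[symmetric] ev_unit[simplified power2_eq_square]
       sum_ev[where f="\<lambda>_. 1", simplified])
    finally have uu: "(\<Sum>x<n. (u x)\<^sup>2) = 1" .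
    have ue: "(\<Sum>l<n. u l * A [l,j,k]) = s * (B i j k + B p j k)" for j k
      using that by (simp add: u_def algebra_simps sum.distrib sum_distrib_left[symmetric] sum_ev B_def)
    have "(\<Sum>m<n. s * (B i j m + B p j m) * (s * (B i l m + B p l m))) = (if j = l then 1 else 0)"
      using orth3_0[OF O uu] that unfolding orth_matrix_def ue by simp
    also have "(\<Sum>m<n. s * (B i j m + B p j m) * (s * (B i l m + B p l m)))
       = s * s * ((\<Sum>m<n. B i j m * B i l m) + (\<Sum>m<n. B p j m * B p l m) + (\<Sum>m<n. B i j m * B p l m + B p j m * B i l m))"
      by (simp add: algebra_simps sum.distrib sum_distrib_left)
    finally show ?thesis using O1 that ss by (auto split: if_splits)
  qed
  define S where "S l a b c = (\<Sum>m<n. B a l m * B b m c)" for l a b c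
  have anti: "S l a b c + S l b a c = 0" if "a<n" "b<n" "c<n" "l<n" "a\<noteq>b" for l a b c
  proof -
    have "(\<Sum>m<n. B a l m * B b c m + B b l m * B a c m) = 0" using O2 that by blast
    moreover have "(\<Sum>m<n. B a l m * B b c m + B b l m * B a c m) = S l a b c + S l b a c"
      unfolding S_def sum.distrib[symmetric] using that by (intro sum.cong refl) (simp add: B23)
    ultimately show ?thesis by simp
  qed
  have symS: "S l a b c = S l a c b" if "a<n" "b<n" "c<n" "l<n" for l a b c
    unfolding S_def using that by (intro sum.cong refl) (metis B12 B23 lessThan_iff)
  have n0: "0<n" "1<n" "2<n" using n by auto
  have S0: "S l 0 1 2 = 0" if "l<n" for l
  proof -
    have "S l 0 1 2 + S l 1 0 2 = 0" "S l 1 2 0 + S l 2 1 0 = 0" "S l 2 0 1 + S l 0 2 1 = 0"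
      using anti n0 that by auto
    moreover have "S l 1 0 2 = S l 1 2 0" "S l 2 1 0 = S l 2 0 1" "S l 0 2 1 = S l 0 1 2"
      using symS n0 that by auto
    ultimately show ?thesis by linarith
  qed
  have B0: "B 1 q 2 = 0" if "q<n" for q
  proof -
    have "(\<Sum>m<n. (if q = m then 1 else 0) * B 1 m 2) = (\<Sum>m<n. if m = q then B 1 q 2 else 0)"
      by (rule sum.cong) auto
    then have "B 1 q 2 = (\<Sum>m<n. (if q = m then 1 else 0) * B 1 m 2)" using that by simp
    also have "\<dots> = (\<Sum>m<n. (\<Sum>l<n. B 0 q l * B 0 m l) * B 1 m 2)"
      using O1 that n0 by (intro sum.cong refl) simp
    also have "\<dots> = (\<Sum>m<n. \<Sum>l<n. B 0 q l * (B 0 m l * B 1 m 2))"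
      by (simp only: sum_distrib_right mult.assoc)
    also have "\<dots> = (\<Sum>l<n. \<Sum>m<n. B 0 q l * (B 0 m l * B 1 m 2))"
      by (rule sum.swap)
    also have "\<dots> = (\<Sum>l<n. B 0 q l * S l 0 1 2)"
    proof (rule sum.cong[OF refl])
      fix l assume l: "l \<in> {..<n}"
      have "(\<Sum>m<n. B 0 q l * (B 0 m l * B 1 m 2)) = B 0 q l * (\<Sum>m<n. B 0 m l * B 1 m 2)"
        by (simp only: sum_distrib_left)
      also have "(\<Sum>m<n. B 0 m l * B 1 m 2) = S l 0 1 2"
        unfolding S_def
      proof (rule sum.cong[OF refl])
        fix m assume "m \<in> {..<n}"
        then show "B 0 m l * B 1 m 2 = B 0 l m * B 1 m 2" using B23[of 0 m l] n0 l by simp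
      qed
      finally show "(\<Sum>m<n. B 0 q l * (B 0 m l * B 1 m 2)) = B 0 q l * S l 0 1 2" .
    qed
    also have "\<dots> = 0" using S0 by simp
    finally show ?thesis .
  qed
  have "(\<Sum>m<n. B 1 2 m * B 1 2 m) = 1" using O1 n0 by simp
  moreover have "(\<Sum>m<n. B 1 2 m * B 1 2 m) = 0"
  proof (rule sum.neutral, rule ballI)
    fix m assume "m \<in> {..<n}"
    then have "B 1 2 m = 0" using B23[of 1 2 m] B0[of m] n0 by simp
    then show "B 1 2 m * B 1 2 m = 0" by simp
  qed
  ultimately show False by simp
qed

lemma reduce3:
  assumes "3 \<le> d" "1 \<le> n" "sym_tensor n d A" "orth_tensor n d A"
  shows "\<exists>B. sym_tensor n 3 B \<and> orth_tensor n 3 B"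
  using assms
proof (induction d arbitrary: A rule: nat_induct_at_least)
  case base then show ?case by blast
next
  case (Suc d)
  obtain m where dm: "d = Suc (Suc (Suc m))" using Suc.hyps by (metis Suc3_eq_add_3 add.commute le_Suc_ex)
  have "orth_tensor n (Suc (Suc (Suc (Suc m)))) A" using Suc.prems(3) unfolding dm .
  then have "orth_tensor n d (contract n 0 (ev 0) A)"
    using orth_contract0[of n "Suc m" A "ev 0"] ev_unit[of 0 n] Suc.prems(1) unfolding dm by simp
  moreover have "sym_tensor n d (contract n 0 (ev 0) A)" using sym_contract0 Suc.prems(2) by blast
  ultimately show ?case using Suc.IH Suc.prems(1) by blast
qed

lemma ch_main:
  assumes "3 \<le> d" "sym_tensor 2 d A" "orth_tensor 2 d A"
  shows "\<exists>\<gamma>. cmod \<gamma> = 1 \<and> chtype d A \<gamma>"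
  using assms
proof (induction d arbitrary: A rule: nat_induct_at_least)
  case base then show ?case using base3 by blast
next
  case (Suc d) then show ?case using step2 by blast
qed

lemma prod_factor:
  fixes f :: "nat \<Rightarrow> complex" and xs :: "nat list"
  assumes "length xs = d" "\<And>k. k < d \<Longrightarrow> f k = r * (if xs!k = 1 then w else 1)"
  shows "(\<Prod>k<d. f k) = r ^ d * w ^ count (mset xs) 1"
proof -
  have "(\<Prod>k<d. f k) = (\<Prod>k<d. r * (if xs!k = 1 then w else 1))" using assms(2) by simp
  also have "\<dots> = r ^ d * (\<Prod>k<length xs. (if xs!k = 1 then w else 1))"
    by (simp add: prod.distrib assms(1))
  also have "\<dots> = r ^ d * w ^ count (mset xs) 1" by (subst prod_if_count) (rule refl)
  finally show ?thesis .
qed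

lemma orth2_eqs:
  assumes "orth_matrix 2 \<rho>"
  shows "(\<rho> 0 0)^2 + (\<rho> 0 1)^2 = 1" "(\<rho> 1 0)^2 + (\<rho> 1 1)^2 = 1" "\<rho> 0 0 * \<rho> 1 0 + \<rho> 0 1 * \<rho> 1 1 = 0"
  using assms unfolding orth_matrix_def
  by (auto simp: numeral_2_eq_2 power2_eq_square dest!: spec[of _ 0] spec[of _ 1])

lemma dir1:
  assumes d: "3 \<le> d" and S: "sym_tensor 2 d A" and O: "orth_tensor 2 d A"
  shows "\<exists>\<rho>. orth_matrix 2 \<rho> \<and> (\<forall>is \<in> tidx 2 d. A is = tensor_act 2 d \<rho> A0 is)"
proof -
  obtain \<gamma> where g: "cmod \<gamma> = 1" "chtype d A \<gamma>" using ch_main[OF d S O] by blast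
  obtain r where r: "\<gamma> = r ^ d" using exists_complex_root[of d \<gamma>] d by auto
  have "cmod r ^ d = 1" using g(1) r by (simp add: norm_power)
  then have r1: "cmod r = 1" using power_eq_1_iff[of "cmod r" d] d by auto
  have rr: "(Re r)^2 + (Im r)^2 = 1" using cmod1[OF r1] .
  define \<rho> where "\<rho> i k = (if i = 1 then (if k = 0 then - Im r else Re r) else (if k = 0 then Re r else Im r))" for i k :: nat
  have "orth_matrix 2 \<rho>"
    unfolding orth_matrix_def
  proof (intro allI impI)
    fix i l :: nat assume "i < 2" "l < 2"
    then have "i = 0 \<or> i = 1" "l = 0 \<or> l = 1" by auto
    then show "(\<Sum>k<2. \<rho> i k * \<rho> l k) = (if i = l then 1 else 0)"
      using rr by (auto simp: numeral_2_eq_2 \<rho>_def power2_eq_square algebra_simps)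
  qed
  moreover have "\<forall>is \<in> tidx 2 d. A is = tensor_act 2 d \<rho> A0 is"
  proof
    fix xs assume xs: "xs \<in> tidx 2 d"
    have len: "length xs = d" using xs by (simp add: tidx_def)
    have "(\<Prod>k<d. complex_of_real (\<rho> (xs!k) 0) + \<i> * complex_of_real (\<rho> (xs!k) 1)) = r ^ d * \<i> ^ count (mset xs) 1"
    proof (rule prod_factor[OF len])
      fix k assume "k < d"
      show "complex_of_real (\<rho> (xs!k) 0) + \<i> * complex_of_real (\<rho> (xs!k) 1) = r * (if xs!k = 1 then \<i> else 1)"
        by (auto simp: \<rho>_def complex_eq_iff)
    qed
    then show "A xs = tensor_act 2 d \<rho> A0 xs"
      using g(2) xs r unfolding tact_A0 chtype_def by simp
  qed
  ultimately show ?thesis by blast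
qed

lemma dir2:
  assumes d: "3 \<le> d" and R: "orth_matrix 2 \<rho>" and T: "\<forall>is \<in> tidx 2 d. A is = tensor_act 2 d \<rho> A0 is"
  shows "orth_tensor 2 d A"
proof -
  define a where "a = \<rho> 0 0"
  define b where "b = \<rho> 0 1"
  define c where "c = \<rho> 1 0"
  define e where "e = \<rho> 1 1"
  have E: "a^2 + b^2 = 1" "c^2 + e^2 = 1" "a*c + b*e = 0"
    using orth2_eqs[OF R] unfolding a_def b_def c_def e_def by auto
  define l where "l = a*e - b*c"
  have cl: "c = - l * b"
  proof -
    have "- l * b = c * (a^2 + b^2) - a * (a*c + b*e)" unfolding l_def by (simp add: algebra_simps power2_eq_square)
    then show ?thesis using E by simp
  qed
  have el: "e = l * a"
  proof -
    have "l * a = e * (a^2 + b^2) - b * (a*c + b*e)" unfolding l_def by (simp add: algebra_simps power2_eq_square)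
    then show ?thesis using E by simp
  qed
  have "l^2 = (a^2 + b^2) * (c^2 + e^2) - (a*c + b*e)^2" unfolding l_def by (simp add: algebra_simps power2_eq_square)
  then have "l^2 = 1" using E by simp
  then have l1: "l = 1 \<or> l = -1" by (simp add: power2_eq_1_iff)
  define r where "r = complex_of_real a + \<i> * complex_of_real b"
  have r1: "cmod r = 1" using E(1) unfolding r_def by (simp add: norm_complex_def)
  define w where "w = complex_of_real l * \<i>"
  define \<gamma> where "\<gamma> = (if l = 1 then r ^ d else cnj r ^ d)"
  have g1: "cmod \<gamma> = 1" unfolding \<gamma>_def using r1 by (simp add: norm_power)
  have "chtype d A \<gamma>"
    unfolding chtype_def
  proof
    fix xs assume xs: "xs \<in> tidx 2 d"
    have len: "length xs = d" using xs by (simp add: tidx_def)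
    have "(\<Prod>k<d. complex_of_real (\<rho> (xs!k) 0) + \<i> * complex_of_real (\<rho> (xs!k) 1)) = r ^ d * w ^ count (mset xs) 1"
    proof (rule prod_factor[OF len])
      fix k assume "k < d"
      then have "xs!k \<in> set xs" using len by simp
      then have "xs!k < 2" using xs by (auto simp: tidx_def)
      then have "xs!k = 0 \<or> xs!k = 1" by auto
      then show "complex_of_real (\<rho> (xs!k) 0) + \<i> * complex_of_real (\<rho> (xs!k) 1) = r * (if xs!k = 1 then w else 1)"
      proof
        assume "xs!k = 0" then show ?thesis by (simp add: r_def a_def b_def)
      next
        assume h: "xs!k = 1"
        have c1: "\<rho> 1 0 = - l * b" using cl unfolding c_def .
        have e1: "\<rho> 1 1 = l * a" using el unfolding e_def .
        have "\<rho> (xs!k) 0 = - l * b" "\<rho> (xs!k) 1 = l * a" using h c1 e1 by simp_all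
        then show ?thesis using h
          by (simp add: r_def w_def complex_eq_iff algebra_simps)
      qed
    qed
    then have A: "A xs = Re (r ^ d * w ^ count (mset xs) 1)"
      using T xs unfolding tact_A0 by simp
    show "A xs = Re (\<gamma> * \<i> ^ count (mset xs) 1)"
    proof (cases "l = 1")
      case True then show ?thesis using A unfolding \<gamma>_def w_def by simp
    next
      case False
      then have "l = -1" using l1 by simp
      then have w: "w = - \<i>" unfolding w_def by simp
      have eq: "r ^ d * w ^ count (mset xs) 1 = cnj (cnj r ^ d * \<i> ^ count (mset xs) 1)"
        unfolding w by (simp only: complex_cnj_mult complex_cnj_power complex_cnj_cnj complex_cnj_i)
      have "A xs = Re (cnj (cnj r ^ d * \<i> ^ count (mset xs) 1))" using A unfolding eq .
      then have "A xs = Re (cnj r ^ d * \<i> ^ count (mset xs) 1)" by (simp only: cnj.sel(1))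
      moreover have "\<gamma> = cnj r ^ d" unfolding \<gamma>_def using False by (simp only: if_False)
      ultimately show ?thesis by (simp only:)
    qed
  qed
  have "d = Suc (Suc (d - 2))" using d by arith
  then obtain k where dk: "d = Suc (Suc k)" by blast
  show ?thesis using ch_orth[OF g1, of k A] \<open>chtype d A \<gamma>\<close> unfolding dk by blast
qed

theorem proposition1p6:
  fixes d n :: nat
  assumes "d \<ge> 3"
  shows "(\<forall>A. n \<ge> 1 \<and> sym_tensor n d A \<and> orth_tensor n d A \<longrightarrow> n = 1 \<or> n = 2)
       \<and> (\<forall>A. sym_tensor 2 d A \<longrightarrow>
            (orth_tensor 2 d A \<longleftrightarrow>
              (\<exists>\<rho>. orth_matrix 2 \<rho> \<and> (\<forall>is \<in> tidx 2 d. A is = tensor_act 2 d \<rho> A0 is))))"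
proof (intro conjI allI impI)
  fix A assume h: "n \<ge> 1 \<and> sym_tensor n d A \<and> orth_tensor n d A"
  show "n = 1 \<or> n = 2"
  proof (rule ccontr)
    assume "\<not> (n = 1 \<or> n = 2)"
    then have "3 \<le> n" using h by auto
    moreover obtain B where "sym_tensor n 3 B" "orth_tensor n 3 B" using reduce3[OF assms] h by blast
    ultimately show False using no3 by blast
  qed
next
  fix A assume S: "sym_tensor 2 d A"
  show "orth_tensor 2 d A \<longleftrightarrow> (\<exists>\<rho>. orth_matrix 2 \<rho> \<and> (\<forall>is \<in> tidx 2 d. A is = tensor_act 2 d \<rho> A0 is))"
    using dir1[OF assms S] dir2[OF assms] by blast
qed

end
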